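(* Let $Q$ be a quantity space over a field $K$, and let $\mathsf{E}=\{\mathsf{e}_1,\ldots,\mathsf{e}_n\}$ be a basis for the abelian group $Q/{\sim}$. Then there is a subset $E=\{e_1,\ldots,e_n\}$ of $Q$ such that $e_i\in\mathsf{e}_i$ for each $i$ and $E$ is a basis for $Q$.
   Context: A scalable monoid over a (unital, associative) ring $R$ is a monoid $X$ (identity $1_X$, product written $xy$) together with a map $R\times X\to X$, $(\alpha,x)\mapsto\alpha\cdot x$, such that $1\cdot x=x$, $\alpha\cdot(\beta\cdot x)=\alpha\beta\cdot x$ and $\alpha\cdot(xy)=(\alpha\cdot x)y=x(\alpha\cdot y)$. A quantity space over a field $K$ is a commutative scalable monoid $Q$ over $K$ for which there exists a basis, i.e. a finite set $\{e_1,\ldots,e_n\}$ of invertible elements of $Q$ such that every $x\in Q$ has a unique expansion $x=\mu\cdot\prod_{i=1}^n e_i^{k_i}$ with $\mu\in K$ and $k_i\in\mathbb{Z}$. On $Q$, $x\sim y$ means $\alpha\cdot x=\beta\cdot y$ for some $\alpha,\beta\in K$; $[x]$ is the class of $x$; $Q/{\sim}$ is the set of classes with $[x][y]=[xy]$, an abelian group. A basis of a finitely generated abelian group $G$ is a set $\{\varepsilon_1,\ldots,\varepsilon_n\}\subseteq G$ such that every $g\in G$ has a unique expansion $g=\prod_{i=1}^n\varepsilon_i^{k_i}$ with $k_i\in\mathbb{Z}$. *)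

theory Defs
  imports "HOL-Algebra.Algebra"
begin

text \<open>A quantity space Q over a field K is modelled by a type 'q carrying a commutative
  monoid structure (type class comm_monoid_mult) together with a scalar action
  smul :: 'k \<Rightarrow> 'q \<Rightarrow> 'q, where 'k is a field.\<close>

definition scalable_monoid :: "('k::field \<Rightarrow> 'q::comm_monoid_mult \<Rightarrow> 'q) \<Rightarrow> bool" where
  "scalable_monoid smul \<longleftrightarrow>
     (\<forall>x. smul 1 x = x) \<and>
     (\<forall>a b x. smul a (smul b x) = smul (a * b) x) \<and>
     (\<forall>a x y. smul a (x * y) = smul a x * y \<and> smul a (x * y) = x * smul a y)"

definition q_invertible :: "'q::comm_monoid_mult \<Rightarrow> bool" where
  "q_invertible x \<longleftrightarrow> (\<exists>y. x * y = 1)"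

definition q_inv :: "'q::comm_monoid_mult \<Rightarrow> 'q" where
  "q_inv x = (THE y. x * y = 1)"

definition q_zpow :: "'q::comm_monoid_mult \<Rightarrow> int \<Rightarrow> 'q" where
  "q_zpow x k = (if 0 \<le> k then x ^ nat k else q_inv x ^ nat (- k))"

definition q_basis :: "('k::field \<Rightarrow> 'q::comm_monoid_mult \<Rightarrow> 'q) \<Rightarrow> 'q set \<Rightarrow> bool" where
  "q_basis smul E \<longleftrightarrow>
     finite E \<and> (\<forall>e\<in>E. q_invertible e) \<and>
     (\<forall>x. \<exists>!(mu, k). k \<in> E \<rightarrow>\<^sub>E (UNIV :: int set) \<and>
                       x = smul mu (\<Prod>e\<in>E. q_zpow e (k e)))"

definition quantity_space :: "('k::field \<Rightarrow> 'q::comm_monoid_mult \<Rightarrow> 'q) \<Rightarrow> bool" where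
  "quantity_space smul \<longleftrightarrow> scalable_monoid smul \<and> (\<exists>E. q_basis smul E)"

definition q_sim :: "('k::field \<Rightarrow> 'q::comm_monoid_mult \<Rightarrow> 'q) \<Rightarrow> 'q \<Rightarrow> 'q \<Rightarrow> bool" where
  "q_sim smul x y \<longleftrightarrow> (\<exists>a b. smul a x = smul b y)"

definition q_cls :: "('k::field \<Rightarrow> 'q::comm_monoid_mult \<Rightarrow> 'q) \<Rightarrow> 'q \<Rightarrow> 'q set" where
  "q_cls smul x = {y. q_sim smul x y}"

text \<open>The quotient Q/~ as a (HOL-Algebra) monoid of classes, with [x][y] = [xy].\<close>
definition q_quot :: "('k::field \<Rightarrow> 'q::comm_monoid_mult \<Rightarrow> 'q) \<Rightarrow> 'q set monoid" where
  "q_quot smul =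
     \<lparr> carrier = range (q_cls smul),
       monoid.mult = (\<lambda>A B. {z. \<exists>a\<in>A. \<exists>b\<in>B. q_sim smul z (a * b)}),
       monoid.one = q_cls smul 1 \<rparr>"

definition group_basis :: "('a, 'b) monoid_scheme \<Rightarrow> 'a set \<Rightarrow> bool" where
  "group_basis G B \<longleftrightarrow>
     finite B \<and> B \<subseteq> carrier G \<and>
     (\<forall>g\<in>carrier G. \<exists>!k. k \<in> B \<rightarrow>\<^sub>E (UNIV :: int set) \<and>
                        g = finprod G (\<lambda>\<epsilon>. \<epsilon> [^]\<^bsub>G\<^esub> (k \<epsilon>)) B)"

end

theory Submission
  imports Defs
begin

lemma smA:
  assumes "scalable_monoid smul"
  shows "smul 1 x = x" "smul a (smul b x) = smul (a * b) x"
    "smul a (x * y) = smul a x * y" "smul a (x * y) = x * smul a y"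
  using assms unfolding scalable_monoid_def by metis+

lemma sim_refl: "scalable_monoid smul \<Longrightarrow> q_sim smul x x"
  unfolding q_sim_def by blast

lemma sim_sym: "q_sim smul x y \<Longrightarrow> q_sim smul y x"
  unfolding q_sim_def by metis

lemma sim_trans:
  assumes sm: "scalable_monoid smul" and "q_sim smul x y" "q_sim smul y z"
  shows "q_sim smul x z"
proof -
  obtain a b where ab: "smul a x = smul b y" using assms(2) unfolding q_sim_def by blast
  obtain c d where cd: "smul c y = smul d z" using assms(3) unfolding q_sim_def by blast
  have "smul (c * a) x = smul c (smul a x)" using smA[OF sm] by simp
  also have "\<dots> = smul (c * b) y" using ab smA[OF sm] by simp
  also have "\<dots> = smul b (smul c y)" using smA[OF sm] by (simp add: mult.commute)
  also have "\<dots> = smul (b * d) z" using cd smA[OF sm] by simp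
  finally show ?thesis unfolding q_sim_def by blast
qed

lemma sim_mult:
  assumes sm: "scalable_monoid smul" and "q_sim smul x x'" "q_sim smul y y'"
  shows "q_sim smul (x * y) (x' * y')"
proof -
  obtain a b where ab: "smul a x = smul b x'" using assms(2) unfolding q_sim_def by blast
  obtain c d where cd: "smul c y = smul d y'" using assms(3) unfolding q_sim_def by blast
  have "smul (a * c) (x * y) = smul a x * smul c y" using smA[OF sm]
    by (metis mult.commute)
  also have "\<dots> = smul b x' * smul d y'" using ab cd by simp
  also have "\<dots> = smul (b * d) (x' * y')" using smA[OF sm] by (metis mult.commute)
  finally show ?thesis unfolding q_sim_def by blast
qed

lemma cls_eq_iff:
  assumes sm: "scalable_monoid smul"
  shows "q_cls smul x = q_cls smul y \<longleftrightarrow> q_sim smul x y"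
proof
  assume "q_cls smul x = q_cls smul y"
  then have "y \<in> q_cls smul x" using sim_refl[OF sm] unfolding q_cls_def by blast
  then show "q_sim smul x y" unfolding q_cls_def by simp
next
  assume "q_sim smul x y"
  then show "q_cls smul x = q_cls smul y" unfolding q_cls_def
    using sim_trans[OF sm] sim_sym by blast
qed

lemma mem_cls_eq:
  assumes sm: "scalable_monoid smul" and "z \<in> q_cls smul x"
  shows "q_cls smul z = q_cls smul x"
  using assms cls_eq_iff[OF sm] sim_sym unfolding q_cls_def by blast

lemma quot_mult:
  assumes sm: "scalable_monoid smul"
  shows "monoid.mult (q_quot smul) (q_cls smul x) (q_cls smul y) = q_cls smul (x * y)"
proof -
  have A: "q_sim smul (x * y) z" if "q_sim smul x a" "q_sim smul y b" "q_sim smul z (a * b)" for z a b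
    using that sim_mult[OF sm] sim_trans[OF sm] sim_sym by metis
  have B: "q_sim smul x x" "q_sim smul y y" using sim_refl[OF sm] by auto
  have C: "\<exists>a. q_sim smul x a \<and> (\<exists>b. q_sim smul y b \<and> q_sim smul z (a * b))"
    if "q_sim smul (x * y) z" for z
    using B sim_sym[OF that] by blast
  show ?thesis unfolding q_quot_def q_cls_def using A C by auto
qed

lemma inv_unique_q:
  fixes x :: "'q::comm_monoid_mult"
  assumes "x * y = 1" shows "q_inv x = y"
  unfolding q_inv_def
proof (rule the_equality)
  fix y' assume "x * y' = 1"
  then show "y' = y" using assms by (metis mult.assoc mult.commute mult_1_left)
qed (fact assms)

lemma q_inv_r: "q_invertible x \<Longrightarrow> x * q_inv x = 1"
  unfolding q_invertible_def using inv_unique_q by metis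

lemma invertible_mult: "q_invertible x \<Longrightarrow> q_invertible y \<Longrightarrow> q_invertible (x * y)"
  unfolding q_invertible_def by (metis mult.assoc mult.commute mult_1_left)

lemma invertible_pow: "q_invertible x \<Longrightarrow> q_invertible (x ^ n)"
  by (induction n) (auto simp: invertible_mult, auto simp: q_invertible_def)

lemma invertible_inv: "q_invertible x \<Longrightarrow> q_invertible (q_inv x)"
  unfolding q_invertible_def by (metis q_inv_r q_invertible_def mult.commute)

lemma invertible_zpow: "q_invertible x \<Longrightarrow> q_invertible (q_zpow x k)"
  unfolding q_zpow_def by (simp add: invertible_pow invertible_inv)

lemma invertible_prod: "finite A \<Longrightarrow> (\<And>a. a \<in> A \<Longrightarrow> q_invertible (h a)) \<Longrightarrow> q_invertible (\<Prod>a\<in>A. h a)"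
proof (induction A rule: finite_induct)
  case empty then show ?case by (simp add: q_invertible_def)
next
  case (insert a F) then show ?case by (simp add: invertible_mult)
qed


context
  fixes smul :: "'k::field \<Rightarrow> 'q::comm_monoid_mult \<Rightarrow> 'q" and E0 :: "'q set"
  assumes sm: "scalable_monoid smul" and qb: "q_basis smul E0"
begin

definition qmono :: "('q \<Rightarrow> int) \<Rightarrow> 'q" where
  "qmono k = (\<Prod>e\<in>E0. q_zpow e (k e))"

lemma qb_parts1: "finite E0"
  using qb[unfolded q_basis_def, THEN conjunct1] .
lemma qb_parts2: "\<forall>e\<in>E0. q_invertible e"
  using qb[unfolded q_basis_def, THEN conjunct2, THEN conjunct1] .
lemma qb_parts3: "\<forall>x. \<exists>!(mu, k). k \<in> E0 \<rightarrow>\<^sub>E (UNIV :: int set) \<and> x = smul mu (qmono k)"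
  unfolding qmono_def using qb[unfolded q_basis_def, THEN conjunct2, THEN conjunct2] .

lemma fin0: "finite E0" using qb_parts1 .
lemma inv0: "e \<in> E0 \<Longrightarrow> q_invertible e" using qb_parts2 by (rule bspec)

lemma basis_exp: "\<exists>mu k. k \<in> E0 \<rightarrow>\<^sub>E (UNIV :: int set) \<and> x = smul mu (qmono k)"
proof -
  obtain p where "(case p of (mu, k) \<Rightarrow> k \<in> E0 \<rightarrow>\<^sub>E (UNIV :: int set) \<and> x = smul mu (\<Prod>e\<in>E0. q_zpow e (k e)))"
    using spec[OF qb_parts3, of x] unfolding qmono_def by (elim ex1E) 
  then show ?thesis unfolding qmono_def by (cases p) auto
qed

lemma basis_uniq:
  assumes "k \<in> E0 \<rightarrow>\<^sub>E (UNIV :: int set)" "k' \<in> E0 \<rightarrow>\<^sub>E (UNIV :: int set)"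
    "smul mu (qmono k) = smul mu' (qmono k')"
  shows "mu = mu' \<and> k = k'"
proof -
  let ?x = "smul mu (qmono k)"
  have ex: "\<exists>!p. (case p of (mu, k) \<Rightarrow> k \<in> E0 \<rightarrow>\<^sub>E (UNIV :: int set) \<and>
      ?x = smul mu (qmono k))"
    by (rule spec[OF qb_parts3])
  obtain p where p0: "\<forall>q. (case q of (mu, k) \<Rightarrow> k \<in> E0 \<rightarrow>\<^sub>E (UNIV :: int set) \<and>
      ?x = smul mu (qmono k)) \<longrightarrow> q = p"
    using ex by (rule ex1E)
  note p = p0[rule_format]
  have "(mu, k) = p" by (rule p) (simp add: assms(1))
  moreover have "(mu', k') = p" by (rule p) (simp add: assms(2,3))
  ultimately have "(mu, k) = (mu', k')" by simp
  then show ?thesis by simp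
qed

lemma mono_inv: "q_invertible (qmono k)"
  unfolding qmono_def using fin0 inv0 by (intro invertible_prod invertible_zpow) auto

definition zk :: "'q \<Rightarrow> int" where "zk = restrict (\<lambda>_. 0) E0"

lemma zk_PiE: "zk \<in> E0 \<rightarrow>\<^sub>E (UNIV :: int set)" unfolding zk_def by simp

lemma mono_zk: "qmono zk = 1"
  unfolding qmono_def zk_def q_zpow_def by simp

lemma zero_not_inv: "\<not> q_invertible (smul 0 y)"
proof
  assume "q_invertible (smul 0 y)"
  then obtain w where w: "smul 0 y * w = 1" unfolding q_invertible_def by blast
  have 1: "smul 0 (y * w) = 1" using w smA(3)[OF sm] by simp
  have "smul 0 1 = smul 0 (smul 0 (y * w))" using 1 by simp
  also have "\<dots> = 1" by (metis smA(2)[OF sm] 1 mult_zero_left)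
  finally have "smul 0 (qmono zk) = smul 1 (qmono zk)" using mono_zk smA(1)[OF sm] by simp
  then have "(0::'k) = 1" using basis_uniq[OF zk_PiE zk_PiE] by blast
  then show False by simp
qed

lemma inv_form:
  assumes "q_invertible P"
  shows "\<exists>\<nu> j. \<nu> \<noteq> 0 \<and> j \<in> E0 \<rightarrow>\<^sub>E (UNIV :: int set) \<and> P = smul \<nu> (qmono j)"
proof -
  obtain mu k where mk: "k \<in> E0 \<rightarrow>\<^sub>E (UNIV :: int set)" "P = smul mu (qmono k)"
    using basis_exp by blast
  have "mu \<noteq> 0"
  proof
    assume "mu = 0"
    then show False using assms mk(2) zero_not_inv by simp
  qed
  then show ?thesis using mk by blast
qed

lemma L1:
  assumes "q_invertible P" "q_sim smul x P"
  shows "\<exists>mu. x = smul mu P"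
proof -
  obtain \<nu> j where nj: "\<nu> \<noteq> 0" "j \<in> E0 \<rightarrow>\<^sub>E (UNIV :: int set)" "P = smul \<nu> (qmono j)"
    using inv_form[OF assms(1)] by blast
  obtain mu k where mk: "k \<in> E0 \<rightarrow>\<^sub>E (UNIV :: int set)" "x = smul mu (qmono k)"
    using basis_exp by blast
  obtain a b where ab: "smul a x = smul b P" using assms(2) unfolding q_sim_def by blast
  then have "smul (a * mu) (qmono k) = smul (b * \<nu>) (qmono j)"
    using mk nj smA(2)[OF sm] by simp
  then have "k = j" using basis_uniq[OF mk(1) nj(2)] by blast
  then have "x = smul (mu / \<nu>) P" using mk nj smA(2)[OF sm] by simp
  then show ?thesis by blast
qed

lemma L2:
  assumes "q_invertible P" "smul mu P = smul mu' P"
  shows "mu = mu'"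
proof -
  obtain \<nu> j where nj: "\<nu> \<noteq> 0" "j \<in> E0 \<rightarrow>\<^sub>E (UNIV :: int set)" "P = smul \<nu> (qmono j)"
    using inv_form[OF assms(1)] by blast
  then have "smul (mu * \<nu>) (qmono j) = smul (mu' * \<nu>) (qmono j)"
    using assms(2) smA(2)[OF sm] by simp
  then have "mu * \<nu> = mu' * \<nu>" using basis_uniq[OF nj(2) nj(2)] by blast
  then show ?thesis using nj(1) by simp
qed

lemma L3: "\<exists>P. q_invertible P \<and> P \<in> q_cls smul x"
proof -
  obtain mu k where mk: "k \<in> E0 \<rightarrow>\<^sub>E (UNIV :: int set)" "x = smul mu (qmono k)"
    using basis_exp by blast
  have "smul 1 x = smul mu (qmono k)" using mk smA(1)[OF sm] by simp
  then have "q_sim smul x (qmono k)" unfolding q_sim_def by blast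
  then show ?thesis using mono_inv unfolding q_cls_def by blast
qed

end


lemma quot_carrier: "carrier (q_quot smul) = range (q_cls smul)"
  unfolding q_quot_def by simp

lemma quot_one: "one (q_quot smul) = q_cls smul 1"
  unfolding q_quot_def by simp

lemma quot_group:
  fixes smul :: "'k::field \<Rightarrow> 'q::comm_monoid_mult \<Rightarrow> 'q"
  assumes sm: "scalable_monoid smul" and qb: "q_basis smul E0"
  shows "comm_group (q_quot smul)"
proof (rule comm_groupI)
  fix x y assume "x \<in> carrier (q_quot smul)" "y \<in> carrier (q_quot smul)"
  then obtain a b where "x = q_cls smul a" "y = q_cls smul b" by (auto simp: quot_carrier)
  then show "x \<otimes>\<^bsub>q_quot smul\<^esub> y \<in> carrier (q_quot smul)"
    "x \<otimes>\<^bsub>q_quot smul\<^esub> y = y \<otimes>\<^bsub>q_quot smul\<^esub> x"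
    by (simp_all add: quot_mult[OF sm] quot_carrier mult.commute)
next
  fix x y z assume "x \<in> carrier (q_quot smul)" "y \<in> carrier (q_quot smul)" "z \<in> carrier (q_quot smul)"
  then obtain a b c where "x = q_cls smul a" "y = q_cls smul b" "z = q_cls smul c" by (auto simp: quot_carrier)
  then show "x \<otimes>\<^bsub>q_quot smul\<^esub> y \<otimes>\<^bsub>q_quot smul\<^esub> z = x \<otimes>\<^bsub>q_quot smul\<^esub> (y \<otimes>\<^bsub>q_quot smul\<^esub> z)"
    by (simp add: quot_mult[OF sm] mult.assoc)
next
  show "\<one>\<^bsub>q_quot smul\<^esub> \<in> carrier (q_quot smul)" by (simp add: quot_one quot_carrier)
next
  fix x assume "x \<in> carrier (q_quot smul)"
  then obtain a where a: "x = q_cls smul a" by (auto simp: quot_carrier)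
  then show "\<one>\<^bsub>q_quot smul\<^esub> \<otimes>\<^bsub>q_quot smul\<^esub> x = x" by (simp add: quot_one quot_mult[OF sm])
  obtain P where P: "q_invertible P" "P \<in> q_cls smul a" using L3[OF sm qb] by blast
  then have x: "x = q_cls smul P" using a mem_cls_eq[OF sm] by simp
  obtain w where w: "P * w = 1" using P(1) unfolding q_invertible_def by blast
  have "q_cls smul w \<otimes>\<^bsub>q_quot smul\<^esub> x = \<one>\<^bsub>q_quot smul\<^esub>"
    using x w by (simp add: quot_one quot_mult[OF sm] mult.commute)
  moreover have "q_cls smul w \<in> carrier (q_quot smul)" by (simp add: quot_carrier)
  ultimately show "\<exists>y\<in>carrier (q_quot smul). y \<otimes>\<^bsub>q_quot smul\<^esub> x = \<one>\<^bsub>q_quot smul\<^esub>" by blast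
qed

lemma quot_natpow:
  assumes sm: "scalable_monoid smul"
  shows "q_cls smul u [^]\<^bsub>q_quot smul\<^esub> (n::nat) = q_cls smul (u ^ n)"
  by (induction n) (simp_all add: quot_one quot_mult[OF sm] mult.commute)

lemma quot_intpow:
  fixes smul :: "'k::field \<Rightarrow> 'q::comm_monoid_mult \<Rightarrow> 'q"
  assumes sm: "scalable_monoid smul" and qb: "q_basis smul E0" and u: "q_invertible u"
  shows "q_cls smul u [^]\<^bsub>q_quot smul\<^esub> (k::int) = q_cls smul (q_zpow u k)"
proof (cases "k < 0")
  case False
  then show ?thesis by (simp add: int_pow_def2 q_zpow_def quot_natpow[OF sm])
next
  case True
  interpret G: comm_group "q_quot smul" by (rule quot_group[OF sm qb])
  have "q_cls smul (q_inv u ^ nat (- k)) \<otimes>\<^bsub>q_quot smul\<^esub> q_cls smul (u ^ nat (- k))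
      = \<one>\<^bsub>q_quot smul\<^esub>"
    using q_inv_r[OF u] by (simp add: quot_one quot_mult[OF sm] power_mult_distrib[symmetric] mult.commute)
  then have "inv\<^bsub>q_quot smul\<^esub> (q_cls smul (u ^ nat (- k))) = q_cls smul (q_inv u ^ nat (- k))"
    by (intro G.inv_equality) (auto simp: quot_carrier)
  then show ?thesis using True by (simp add: int_pow_def2 q_zpow_def quot_natpow[OF sm])
qed

lemma quot_finprod:
  fixes smul :: "'k::field \<Rightarrow> 'q::comm_monoid_mult \<Rightarrow> 'q"
  assumes sm: "scalable_monoid smul" and qb: "q_basis smul E0" and A: "finite A"
  shows "finprod (q_quot smul) (\<lambda>a. q_cls smul (h a)) A = q_cls smul (\<Prod>a\<in>A. h a)"
  using A
proof (induction A rule: finite_induct)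
  case empty
  interpret G: comm_group "q_quot smul" by (rule quot_group[OF sm qb])
  show ?case by (simp add: quot_one)
next
  case (insert a F)
  interpret G: comm_group "q_quot smul" by (rule quot_group[OF sm qb])
  show ?case using insert
    by (subst G.finprod_insert) (auto simp: quot_carrier quot_mult[OF sm])
qed


theorem proposition3p24:
  fixes smul :: "'k::field \<Rightarrow> 'q::comm_monoid_mult \<Rightarrow> 'q"
    and B :: "'q set set"
  assumes "quantity_space smul"
    and "group_basis (q_quot smul) B"
  shows "\<exists>f. (\<forall>\<epsilon>\<in>B. f \<epsilon> \<in> \<epsilon>) \<and> inj_on f B \<and> q_basis smul (f ` B)"
proof -
  have sm: "scalable_monoid smul" using assms(1) unfolding quantity_space_def by blast
  obtain E0 where qb: "q_basis smul E0" using assms(1) unfolding quantity_space_def by blast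
  let ?G = "q_quot smul"
  interpret G: comm_group ?G by (rule quot_group[OF sm qb])
  have finB: "finite B" and subB: "B \<subseteq> carrier ?G"
    and gb: "\<And>g. g \<in> carrier ?G \<Longrightarrow> \<exists>!k. k \<in> B \<rightarrow>\<^sub>E (UNIV :: int set) \<and>
                        g = finprod ?G (\<lambda>\<epsilon>. \<epsilon> [^]\<^bsub>?G\<^esub> (k \<epsilon>)) B"
    using assms(2) unfolding group_basis_def by auto
  define f :: "'q set \<Rightarrow> 'q" where "f \<epsilon> = (SOME P. q_invertible P \<and> P \<in> \<epsilon>)" for \<epsilon>
  have f: "q_invertible (f \<epsilon>) \<and> f \<epsilon> \<in> \<epsilon> \<and> q_cls smul (f \<epsilon>) = \<epsilon>" if eB: "\<epsilon> \<in> B" for \<epsilon>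
  proof -
    obtain x where x: "\<epsilon> = q_cls smul x" using eB subB by (auto simp: quot_carrier)
    have "\<exists>P. q_invertible P \<and> P \<in> \<epsilon>" using L3[OF sm qb] x by blast
    then have "q_invertible (f \<epsilon>) \<and> f \<epsilon> \<in> \<epsilon>" unfolding f_def by (rule someI_ex)
    then show ?thesis using mem_cls_eq[OF sm] x by blast
  qed
  have inj: "inj_on f B"
  proof (rule inj_onI)
    fix a b assume "a \<in> B" "b \<in> B" "f a = f b"
    then show "a = b" using f by metis
  qed
  define PB where "PB \<kappa> = (\<Prod>\<epsilon>\<in>B. q_zpow (f \<epsilon>) (\<kappa> \<epsilon>))" for \<kappa>
  have PB_inv: "q_invertible (PB \<kappa>)" for \<kappa>
    unfolding PB_def using finB f by (intro invertible_prod invertible_zpow) auto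
  have PB_cls: "q_cls smul (PB \<kappa>) = finprod ?G (\<lambda>\<epsilon>. \<epsilon> [^]\<^bsub>?G\<^esub> (\<kappa> \<epsilon>)) B" for \<kappa>
  proof -
    have "finprod ?G (\<lambda>\<epsilon>. \<epsilon> [^]\<^bsub>?G\<^esub> (\<kappa> \<epsilon>)) B
        = finprod ?G (\<lambda>\<epsilon>. q_cls smul (q_zpow (f \<epsilon>) (\<kappa> \<epsilon>))) B"
    proof (rule G.finprod_cong')
      fix \<epsilon> assume "\<epsilon> \<in> B"
      then show "\<epsilon> [^]\<^bsub>?G\<^esub> (\<kappa> \<epsilon>) = q_cls smul (q_zpow (f \<epsilon>) (\<kappa> \<epsilon>))"
        using f quot_intpow[OF sm qb] by metis
    qed (auto simp: quot_carrier)
    also have "\<dots> = q_cls smul (PB \<kappa>)" unfolding PB_def by (rule quot_finprod[OF sm qb finB])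
    finally show ?thesis by simp
  qed
  have reidx: "(\<Prod>e\<in>f ` B. q_zpow e (k e)) = PB (\<lambda>\<epsilon>. k (f \<epsilon>))" for k
    unfolding PB_def using prod.reindex[OF inj] by simp
  have basis: "q_basis smul (f ` B)"
    unfolding q_basis_def
  proof (intro conjI ballI allI)
    show "finite (f ` B)" using finB by simp
  next
    fix e assume "e \<in> f ` B" then show "q_invertible e" using f by auto
  next
    fix x
    let ?R = "\<lambda>(mu, k). k \<in> f ` B \<rightarrow>\<^sub>E (UNIV :: int set) \<and> x = smul mu (\<Prod>e\<in>f ` B. q_zpow e (k e))"
    have clsx: "q_cls smul x \<in> carrier ?G" by (simp add: quot_carrier)
    obtain \<kappa> where \<kappa>: "\<kappa> \<in> B \<rightarrow>\<^sub>E (UNIV :: int set)"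
      "q_cls smul x = finprod ?G (\<lambda>\<epsilon>. \<epsilon> [^]\<^bsub>?G\<^esub> (\<kappa> \<epsilon>)) B"
      using gb[OF clsx] by blast
    have "q_sim smul x (PB \<kappa>)" using \<kappa>(2) PB_cls cls_eq_iff[OF sm] by metis
    then obtain mu where mu: "x = smul mu (PB \<kappa>)" using L1[OF sm qb PB_inv] by blast
    define k where "k = restrict (\<lambda>e. \<kappa> (inv_into B f e)) (f ` B)"
    have kf: "k (f \<epsilon>) = \<kappa> \<epsilon>" if "\<epsilon> \<in> B" for \<epsilon>
      unfolding k_def using that inj by simp
    have "PB (\<lambda>\<epsilon>. k (f \<epsilon>)) = PB \<kappa>" unfolding PB_def using kf by simp
    then have R1: "?R (mu, k)" using mu reidx[of k] unfolding k_def by simp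
    have uniq: "q = (mu, k)" if "?R q" for q
    proof -
      obtain mu' k' where q: "q = (mu', k')" by (cases q)
      have k': "k' \<in> f ` B \<rightarrow>\<^sub>E (UNIV :: int set)" and x': "x = smul mu' (PB (\<lambda>\<epsilon>. k' (f \<epsilon>)))"
        using that q reidx[of k'] by auto
      define \<kappa>' where "\<kappa>' = restrict (\<lambda>\<epsilon>. k' (f \<epsilon>)) B"
      have PBeq: "PB \<kappa>' = PB (\<lambda>\<epsilon>. k' (f \<epsilon>))" unfolding PB_def \<kappa>'_def by simp
      have "smul 1 x = smul mu' (PB \<kappa>')" using x' PBeq smA(1)[OF sm] by simp
      then have "q_sim smul x (PB \<kappa>')" unfolding q_sim_def by blast
      then have "q_cls smul x = finprod ?G (\<lambda>\<epsilon>. \<epsilon> [^]\<^bsub>?G\<^esub> (\<kappa>' \<epsilon>)) B"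
        using PB_cls cls_eq_iff[OF sm] by metis
      moreover have "\<kappa>' \<in> B \<rightarrow>\<^sub>E (UNIV :: int set)" unfolding \<kappa>'_def by simp
      ultimately have "\<kappa>' = \<kappa>" using gb[OF clsx] \<kappa> by blast
      then have "k' = k"
      proof -
        assume eq: "\<kappa>' = \<kappa>"
        show "k' = k"
        proof (rule ext)
          fix e show "k' e = k e"
          proof (cases "e \<in> f ` B")
            case True
            then obtain \<epsilon> where "\<epsilon> \<in> B" "e = f \<epsilon>" by blast
            then show ?thesis using kf eq unfolding \<kappa>'_def by (metis restrict_apply')
          next
            case False
            then show ?thesis using k' unfolding k_def by (simp add: PiE_def extensional_def)
          qed
        qed
      qed
      then have "x = smul mu' (PB \<kappa>)" using x' \<open>PB (\<lambda>\<epsilon>. k (f \<epsilon>)) = PB \<kappa>\<close> by simp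
      then have "mu' = mu" using L2[OF sm qb PB_inv] mu by metis
      then show ?thesis using q \<open>k' = k\<close> by simp
    qed
    show "\<exists>!p. ?R p" using R1 uniq by blast
  qed
  show ?thesis using f inj basis by blast
qed

end
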